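(* Let $G$ be a graph with diameter $h$ and with hyperbolicity $\delta(G)=h$. Then for each quadruple $a,b,c,d\in V(G)$ with $\delta(a,b,c,d)=h$, exactly two disjoint pairs among $a,b,c,d$ are at distance $h$ and all the other pairs are at distance $h/2$.
   Context: For a graph $G=(V,E)$, $\mathrm{dist}(x,y)$ denotes the length of a shortest $x$-$y$ path ($\infty$ if none exists). For $a,b,c,d\in V$ let $D_1=\mathrm{dist}(a,b)+\mathrm{dist}(c,d)$, $D_2=\mathrm{dist}(a,c)+\mathrm{dist}(b,d)$, $D_3=\mathrm{dist}(a,d)+\mathrm{dist}(b,c)$, and define $\delta(a,b,c,d)=|D_i-D_j|$ where $\{i,j,k\}=\{1,2,3\}$ and $D_k\le\min\{D_i,D_j\}$ (i.e., the difference of the two largest of the three sums). The hyperbolicity of $G$ is $\delta(G)=\max_{a,b,c,d\in V}\delta(a,b,c,d)$. *)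

theory Defs
  imports Main "HOL-Library.Extended_Nat"
begin

definition simple_graph :: "'a set \<Rightarrow> ('a \<Rightarrow> 'a \<Rightarrow> bool) \<Rightarrow> bool" where
  "simple_graph V E \<longleftrightarrow> finite V \<and> V \<noteq> {} \<and>
     (\<forall>x y. E x y \<longrightarrow> x \<in> V \<and> y \<in> V \<and> E y x \<and> x \<noteq> y)"

fun walk :: "('a \<Rightarrow> 'a \<Rightarrow> bool) \<Rightarrow> 'a list \<Rightarrow> bool" where
  "walk E [] = False"
| "walk E [x] = True"
| "walk E (x # y # xs) = (E x y \<and> walk E (y # xs))"

text \<open>Graph distance: length of a shortest walk; infinity if none exists.\<close>
definition gdist :: "('a \<Rightarrow> 'a \<Rightarrow> bool) \<Rightarrow> 'a \<Rightarrow> 'a \<Rightarrow> enat" where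
  "gdist E x y = (INF xs \<in> {xs. walk E xs \<and> hd xs = x \<and> last xs = y}. enat (length xs - 1))"

text \<open>delta(a,b,c,d): difference of the two largest of the three distance sums.\<close>
definition four_point_delta :: "('a \<Rightarrow> 'a \<Rightarrow> bool) \<Rightarrow> 'a \<Rightarrow> 'a \<Rightarrow> 'a \<Rightarrow> 'a \<Rightarrow> enat" where
  "four_point_delta E a b c d =
     (let D1 = gdist E a b + gdist E c d;
          D2 = gdist E a c + gdist E b d;
          D3 = gdist E a d + gdist E b c
      in max D1 (max D2 D3) - max (min D1 D2) (max (min D1 D3) (min D2 D3)))"

definition hyperbolicity :: "'a set \<Rightarrow> ('a \<Rightarrow> 'a \<Rightarrow> bool) \<Rightarrow> enat" where
  "hyperbolicity V E = (SUP q \<in> V \<times> V \<times> V \<times> V.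
      (case q of (a, b, c, d) \<Rightarrow> four_point_delta E a b c d))"

definition diameter :: "'a set \<Rightarrow> ('a \<Rightarrow> 'a \<Rightarrow> bool) \<Rightarrow> enat" where
  "diameter V E = (SUP p \<in> V \<times> V. gdist E (fst p) (snd p))"

end

theory Submission
  imports Defs
begin

lemma walk_nonempty: "walk E xs \<Longrightarrow> xs \<noteq> []"
  by (cases xs) auto

lemma walk_snoc: "walk E xs \<Longrightarrow> E (last xs) y \<Longrightarrow> walk E (xs @ [y])"
  by (induction E xs rule: walk.induct) auto

lemma walk_rev0:
  "(\<forall>x y. E x y \<longrightarrow> E y x) \<Longrightarrow> walk E xs \<Longrightarrow> walk E (rev xs)"
proof (induction E xs rule: walk.induct)
  case (3 E x y xs)
  then have w: "walk E (rev (y # xs))" and e: "E x y" by auto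
  have "walk E (rev (y # xs) @ [x])" by (rule walk_snoc[OF w]) (use 3 e in auto)
  then show ?case by simp
qed auto

lemma walk_rev:
  assumes sym: "\<And>x y. E x y \<Longrightarrow> E y x"
  shows "walk E xs \<Longrightarrow> walk E (rev xs)"
  using walk_rev0[of E xs] sym by blast

lemma walk_append: "walk E xs \<Longrightarrow> walk E ys \<Longrightarrow> last xs = hd ys \<Longrightarrow> walk E (xs @ tl ys)"
proof (induction E xs rule: walk.induct)
  case (2 E x)
  then show ?case by (cases ys) auto
next
  case (3 E x y xs)
  then show ?case by auto
qed auto

lemma gdist_sym:
  assumes sym: "\<And>x y. E x y \<Longrightarrow> E y x"
  shows "gdist E x y \<le> gdist E y x"
  unfolding gdist_def
proof (rule INF_mono)
  fix m assume "m \<in> {xs. walk E xs \<and> hd xs = y \<and> last xs = x}"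
  then have m: "walk E m" "hd m = y" "last m = x" by auto
  have ne: "m \<noteq> []" using walk_nonempty[OF m(1)] .
  have "rev m \<in> {xs. walk E xs \<and> hd xs = x \<and> last xs = y}"
    using walk_rev[OF sym m(1)] m ne by (simp add: hd_rev last_rev)
  then show "\<exists>n\<in>{xs. walk E xs \<and> hd xs = x \<and> last xs = y}.
           enat (length n - 1) \<le> enat (length m - 1)" by (intro bexI[of _ "rev m"]) auto
qed

lemma gdist_attained:
  assumes "gdist E x y \<noteq> \<infinity>"
  shows "\<exists>xs. walk E xs \<and> hd xs = x \<and> last xs = y \<and> gdist E x y = enat (length xs - 1)"
proof -
  let ?S = "{xs. walk E xs \<and> hd xs = x \<and> last xs = y}"
  let ?A = "(\<lambda>xs. enat (length xs - 1)) ` ?S"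
  have ne: "?A \<noteq> {}" using assms unfolding gdist_def by (auto simp: top_enat_def[symmetric])
  from ne obtain z where z: "z \<in> ?A" by blast
  have "(LEAST x. x \<in> ?A) \<in> ?A" using z by (rule LeastI)
  moreover have "Inf ?A = (LEAST x. x \<in> ?A)" using ne by (simp only: Inf_enat_def if_False)
  ultimately have "Inf ?A \<in> ?A" by simp
  then show ?thesis unfolding gdist_def by auto
qed

lemma gdist_tri:
  "gdist E x y \<le> gdist E x z + gdist E z y"
proof (cases "gdist E x z = \<infinity> \<or> gdist E z y = \<infinity>")
  case True then show ?thesis by auto
next
  case False
  then have f1: "gdist E x z \<noteq> \<infinity>" and f2: "gdist E z y \<noteq> \<infinity>" by auto
  obtain xs where xs: "walk E xs" "hd xs = x" "last xs = z" "gdist E x z = enat (length xs - 1)"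
    using gdist_attained[OF f1] by blast
  obtain ys where ys: "walk E ys" "hd ys = z" "last ys = y" "gdist E z y = enat (length ys - 1)"
    using gdist_attained[OF f2] by blast
  have nx: "xs \<noteq> []" and ny: "ys \<noteq> []" using xs ys walk_nonempty by auto
  have w: "walk E (xs @ tl ys)" using walk_append[OF xs(1) ys(1)] xs ys by simp
  have hd: "hd (xs @ tl ys) = x" using nx xs by simp
  have la: "last (xs @ tl ys) = y"
  proof (cases "tl ys = []")
    case True then show ?thesis using ny ys xs
      by (metis append_Nil2 hd_Cons_tl last_ConsL)
  next
    case False then show ?thesis using ny ys by (simp add: last_tl)
  qed
  have "gdist E x y \<le> enat (length (xs @ tl ys) - 1)"
    unfolding gdist_def using w hd la by (intro INF_lower) auto
  also have "length (xs @ tl ys) - 1 = (length xs - 1) + (length ys - 1)"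
    using nx ny by (cases ys; cases xs) auto
  then have "enat (length (xs @ tl ys) - 1) = gdist E x z + gdist E z y"
    by (simp add: xs(4) ys(4))
  finally show ?thesis .
qed

lemma core1:
  fixes p q r s t u h :: nat
  assumes "p \<le> h" "q \<le> h" "r \<le> h" "s \<le> h" "t \<le> h" "u \<le> h"
    and a1: "p \<le> r + u" and a2: "p \<le> t + s" and a3: "q \<le> r + t" and a4: "q \<le> u + s"
    and o1: "r+s \<le> p+q" "t+u \<le> p+q"
    and H: "h = p+q - max (r+s) (t+u)"
  shows "p = h \<and> q = h \<and> 2*r = h \<and> 2*t = h \<and> 2*u = h \<and> 2*s = h"
proof -
  define M where "M = max (r+s) (t+u)"
  have M1: "r+s \<le> M" "t+u \<le> M" "M = r+s \<or> M = t+u" unfolding M_def by auto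
  have HM: "h + M = p + q" using H o1 M1 unfolding M_def by linarith
  have b1: "h \<le> 2*r" using HM M1(2) a1 a3 by linarith
  have b2: "h \<le> 2*t" using HM M1(1) a2 a3 by linarith
  have b3: "h \<le> 2*u" using HM M1(1) a1 a4 by linarith
  have b4: "h \<le> 2*s" using HM M1(2) a2 a4 by linarith
  have M2: "M \<le> h" using HM assms(1,2) by linarith
  have "M \<ge> h" using M1(3) b1 b2 b3 b4 by linarith
  then have "M = h" using M2 by simp
  then show ?thesis using HM assms(1-2) M1(1,2) b1 b2 b3 b4 by (intro conjI) linarith+
qed

lemma core:
  fixes p q r s t u h :: nat
  assumes "p \<le> h" "q \<le> h" "r \<le> h" "s \<le> h" "t \<le> h" "u \<le> h"
    "p \<le> r + u" "p \<le> t + s" "q \<le> r + t" "q \<le> u + s"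
    "r \<le> p + u" "r \<le> t + q" "s \<le> p + t" "s \<le> u + q"
    "t \<le> p + s" "t \<le> r + q" "u \<le> p + r" "u \<le> s + q"
    and H: "h = max (p+q) (max (r+s) (t+u)) - max (min (p+q) (r+s)) (max (min (p+q) (t+u)) (min (r+s) (t+u)))"
  shows "(p = h \<and> q = h \<and> 2*r = h \<and> 2*t = h \<and> 2*u = h \<and> 2*s = h)
     \<or> (r = h \<and> s = h \<and> 2*p = h \<and> 2*t = h \<and> 2*u = h \<and> 2*q = h)
     \<or> (t = h \<and> u = h \<and> 2*p = h \<and> 2*r = h \<and> 2*s = h \<and> 2*q = h)"
proof -
  consider "r+s \<le> p+q" "t+u \<le> p+q" | "p+q \<le> r+s" "t+u \<le> r+s" | "p+q \<le> t+u" "r+s \<le> t+u"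
    by linarith
  then show ?thesis
  proof cases
    case 1
    then have "h = p+q - max (r+s) (t+u)" using H by (simp add: max_def min_def)
    from core1[OF assms(1-10) 1 this] show ?thesis by blast
  next
    case 2
    then have h2: "h = r+s - max (p+q) (t+u)" using H by (simp add: max_def min_def)
    have "r = h \<and> s = h \<and> 2*p = h \<and> 2*t = h \<and> 2*u = h \<and> 2*q = h"
      by (rule core1[where p=r and q=s and r=p and s=q and t=t and u=u]; (rule assms(1-18) 2 h2)?)
    then show ?thesis by auto
  next
    case 3
    then have h3: "h = t+u - max (p+q) (r+s)" using H by (simp add: max_def min_def)
    have "t = h \<and> u = h \<and> 2*p = h \<and> 2*r = h \<and> 2*s = h \<and> 2*q = h"
      by (rule core1[where p=t and q=u and r=p and s=q and t=r and u=s]; (rule assms(1-18) 3 h3)?)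
    then show ?thesis by auto
  qed
qed

theorem lemma2:
  fixes V :: "'a set" and E :: "'a \<Rightarrow> 'a \<Rightarrow> bool" and h :: nat
    and a b c d :: 'a
  assumes "simple_graph V E"
    and "diameter V E = enat h"
    and "hyperbolicity V E = enat h"
    and "a \<in> V" "b \<in> V" "c \<in> V" "d \<in> V"
    and "four_point_delta E a b c d = enat h"
  shows "(gdist E a b = enat h \<and> gdist E c d = enat h \<and>
          2 * gdist E a c = enat h \<and> 2 * gdist E a d = enat h \<and>
          2 * gdist E b c = enat h \<and> 2 * gdist E b d = enat h)
       \<or> (gdist E a c = enat h \<and> gdist E b d = enat h \<and>
          2 * gdist E a b = enat h \<and> 2 * gdist E a d = enat h \<and>
          2 * gdist E b c = enat h \<and> 2 * gdist E c d = enat h)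
       \<or> (gdist E a d = enat h \<and> gdist E b c = enat h \<and>
          2 * gdist E a b = enat h \<and> 2 * gdist E a c = enat h \<and>
          2 * gdist E b d = enat h \<and> 2 * gdist E c d = enat h)"
proof -
  have sg: "\<forall>x y. E x y \<longrightarrow> x \<in> V \<and> y \<in> V \<and> E y x \<and> x \<noteq> y"
    using assms(1) unfolding simple_graph_def by (elim conjE)
  have sym: "\<And>x y. E x y \<Longrightarrow> E y x"
    by (rule sg[rule_format, THEN conjunct2, THEN conjunct2, THEN conjunct1])
  have symd: "\<And>x y. gdist E x y = gdist E y x" by (intro order_antisym gdist_sym[OF sym])
  have le: "\<And>x y. x \<in> V \<Longrightarrow> y \<in> V \<Longrightarrow> gdist E x y \<le> enat h"
  proof -
    fix x y assume "x \<in> V" "y \<in> V"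
    then have "(x, y) \<in> V \<times> V" by simp
    then have "gdist E (fst (x, y)) (snd (x, y)) \<le> (SUP p \<in> V \<times> V. gdist E (fst p) (snd p))"
      by (rule SUP_upper)
    then have "gdist E x y \<le> diameter V E" unfolding diameter_def by simp
    then show "gdist E x y \<le> enat h" using assms(2) by simp
  qed
  have fin: "\<And>x y. x \<in> V \<Longrightarrow> y \<in> V \<Longrightarrow> \<exists>n. gdist E x y = enat n \<and> n \<le> h"
  proof -
    fix x y assume xy: "x \<in> V" "y \<in> V"
    obtain n where n: "gdist E x y = enat n" using enat_ile[OF le[OF xy]] by blast
    then show "\<exists>n. gdist E x y = enat n \<and> n \<le> h" using le[OF xy] by simp
  qed
  obtain p where p: "gdist E a b = enat p" "p \<le> h" using fin assms by blast
  obtain q where q: "gdist E c d = enat q" "q \<le> h" using fin assms by blast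
  obtain r where r: "gdist E a c = enat r" "r \<le> h" using fin assms by blast
  obtain s where s: "gdist E b d = enat s" "s \<le> h" using fin assms by blast
  obtain t where t: "gdist E a d = enat t" "t \<le> h" using fin assms by blast
  obtain u where u: "gdist E b c = enat u" "u \<le> h" using fin assms by blast
  have tri: "\<And>x y z m n k. gdist E x y = enat m \<Longrightarrow> gdist E x z = enat n \<Longrightarrow> gdist E z y = enat k \<Longrightarrow> m \<le> n + k"
  proof -
    fix x y z m n k assume "gdist E x y = enat m" "gdist E x z = enat n" "gdist E z y = enat k"
    moreover have "gdist E x y \<le> gdist E x z + gdist E z y" by (rule gdist_tri)
    ultimately show "m \<le> n + k" by simp
  qed
  have ab: "gdist E b a = enat p" "gdist E d c = enat q" "gdist E c a = enat r"
     "gdist E d b = enat s" "gdist E d a = enat t" "gdist E c b = enat u"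
    using symd[of b a] symd[of d c] symd[of c a] symd[of d b] symd[of d a] symd[of c b]
      p(1) q(1) r(1) s(1) t(1) u(1) by simp_all
  have t1: "p \<le> r + u" "p \<le> t + s" "q \<le> r + t" "q \<le> u + s"
    "r \<le> p + u" "r \<le> t + q" "s \<le> p + t" "s \<le> u + q"
    "t \<le> p + s" "t \<le> r + q" "u \<le> p + r" "u \<le> s + q"
    using tri[OF p(1) r(1) ab(6)] tri[OF p(1) t(1) ab(4)] tri[OF q(1) ab(3) t(1)]
      tri[OF q(1) ab(6) s(1)] tri[OF r(1) p(1) u(1)] tri[OF r(1) t(1) ab(2)]
      tri[OF s(1) ab(1) t(1)] tri[OF s(1) u(1) q(1)] tri[OF t(1) p(1) s(1)]
      tri[OF t(1) r(1) q(1)] tri[OF u(1) ab(1) r(1)] tri[OF u(1) s(1) ab(2)]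
    by auto
  have "enat h = four_point_delta E a b c d" using assms(8) by simp
  also have "\<dots> = enat (max (p+q) (max (r+s) (t+u)) - max (min (p+q) (r+s)) (max (min (p+q) (t+u)) (min (r+s) (t+u))))"
    unfolding four_point_delta_def Let_def p q r s t u
    by (simp only: plus_enat_simps(1) max_enat_simps(1) min_enat_simps(1) idiff_enat_enat)
  finally have H: "h = max (p+q) (max (r+s) (t+u)) - max (min (p+q) (r+s)) (max (min (p+q) (t+u)) (min (r+s) (t+u)))"
    by simp
  have two: "\<And>n. 2 * enat n = enat (2*n)" by (simp add: numeral_eq_enat)
  have main: "(p = h \<and> q = h \<and> 2*r = h \<and> 2*t = h \<and> 2*u = h \<and> 2*s = h)
     \<or> (r = h \<and> s = h \<and> 2*p = h \<and> 2*t = h \<and> 2*u = h \<and> 2*q = h)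
     \<or> (t = h \<and> u = h \<and> 2*p = h \<and> 2*r = h \<and> 2*s = h \<and> 2*q = h)"
    using core[OF p(2) q(2) r(2) s(2) t(2) u(2) t1 H] .
  show ?thesis unfolding p(1) q(1) r(1) s(1) t(1) u(1) two enat.inject using main by blast
qed

end
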